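(* Let $c>2$ be a constant. For all sufficiently large $n$ and all $p$ with $\frac{c\log n}{n}\le p\le 1$, we have $g_i\le t_1$ for all $2\le i\le\lfloor n/2\rfloor$, where $t_i=\binom{n-1}{i-1}(1-p)^{i(n-i)}$ and $g_i=t_i+t_{n-i}=\binom{n}{i}(1-p)^{i(n-i)}$.
   Context: $\log$ is the natural logarithm. *)

theory Defs
  imports Complex_Main
begin

definition tfun :: "nat \<Rightarrow> real \<Rightarrow> nat \<Rightarrow> real" where
  "tfun n p i = real ((n - 1) choose (i - 1)) * (1 - p) ^ (i * (n - i))"

definition gfun :: "nat \<Rightarrow> real \<Rightarrow> nat \<Rightarrow> real" where
  "gfun n p i = tfun n p i + tfun n p (n - i)"

end

theory Submission
  imports Defs
begin

lemma key_ineq: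
  fixes c :: real and n i K :: nat
  assumes c: "c > 2" and K: "(c - 2) * (real K - 1) \<ge> 8" and K2: "K \<ge> 2"
    and n1: "real n \<ge> 2 * real K" and n2: "(c-2) * (real n / 2 - 1) \<ge> 4 * real K"
    and n3: "n \<ge> 3"
    and i: "2 \<le> i" "2 * i \<le> n"
  shows "real i * real n \<le> c * ((real i - 1) * (real n - real i - 1))"
proof -
  define d where "d = c - 2"
  have d: "d > 0" using c d_def by simp
  have ri: "real i \<ge> 2" "2 * real i \<le> real n" using i by auto
  have e: "c * ((real i - 1) * (real n - real i - 1)) - real i * real n
     = (real i * (real n - 2 * real i) - 2 * real n + 2) + d * ((real i - 1) * (real n - real i - 1))"
    by (simp add: d_def algebra_simps)
  have nb: "real n - real i - 1 \<ge> real n / 2 - 1" using ri by simp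
  have nb0: "real n / 2 - 1 \<ge> 0" using n3 by simp
  show ?thesis
  proof (cases "i \<ge> K")
    case True
    have "8 * (real n / 2 - 1) \<le> (d * (real K - 1)) * (real n / 2 - 1)"
      using mult_right_mono[OF K[folded d_def] nb0] by simp
    also have "\<dots> = d * ((real K - 1) * (real n / 2 - 1))" by simp
    also have "\<dots> \<le> d * ((real i - 1) * (real n - real i - 1))"
      apply (rule mult_left_mono[OF _ less_imp_le[OF d]])
      apply (rule mult_mono) using True nb nb0 K2 by auto
    finally have A: "d * ((real i - 1) * (real n - real i - 1)) \<ge> 4 * real n - 8" by simp
    have "real i * (real n - 2 * real i) \<ge> 0" using ri by simp
    with A e n3 show ?thesis by simp
  next
    case False
    have "real i * (real n - 2 * real i) \<ge> 2 * (real n - 2 * real K)"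
      apply (rule mult_mono) using ri False n1 by auto
    moreover have "d * ((real i - 1) * (real n - real i - 1)) \<ge> d * (1 * (real n / 2 - 1))"
      apply (rule mult_left_mono[OF _ less_imp_le[OF d]])
      apply (rule mult_mono) using ri nb nb0 by auto
    ultimately show ?thesis using e n2[folded d_def] by simp
  qed
qed

theorem lemma20:
  fixes c :: real
  assumes "c > 2"
  shows "\<exists>N::nat. \<forall>n\<ge>N. \<forall>p::real. c * ln (real n) / real n \<le> p \<and> p \<le> 1 \<longrightarrow>
           (\<forall>i::nat. 2 \<le> i \<and> i \<le> n div 2 \<longrightarrow> gfun n p i \<le> tfun n p 1)"
proof -
  define d where "d = c - 2"
  have d: "d > 0" using assms d_def by simp
  define K :: nat where "K = nat (ceiling (8 / d)) + 2"
  have K2: "K \<ge> 2" by (simp add: K_def)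
  have "real K - 1 \<ge> 8 / d" unfolding K_def by linarith
  hence K: "(c - 2) * (real K - 1) \<ge> 8" using d d_def by (simp add: field_simps)
  define N :: nat where "N = max 3 (max (2*K) (nat (ceiling (2 + 8 * real K / d))))"
  show ?thesis
  proof (intro exI allI impI)
    fix n p i
    assume nN: "N \<le> n" and pp: "c * ln (real n) / real n \<le> p \<and> p \<le> 1"
      and ii: "2 \<le> i \<and> i \<le> n div 2"
    have n3: "n \<ge> 3" and n1: "real n \<ge> 2 * real K" using nN unfolding N_def by auto
    have "real n \<ge> 2 + 8 * real K / d" using nN unfolding N_def by linarith
    hence n2: "(c-2) * (real n / 2 - 1) \<ge> 4 * real K" using d d_def by (simp add: field_simps)
    have i2: "2 * i \<le> n" using ii by auto
    have KI: "real i * real n \<le> c * ((real i - 1) * (real n - real i - 1))"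
      using key_ineq[OF assms K K2 n1 n2 n3] ii i2 by auto
    define q where "q = 1 - p"
    define k where "k = (i - 1) * (n - i - 1)"
    have q0: "q \<ge> 0" using pp q_def by simp
    have kr: "real k = (real i - 1) * (real n - real i - 1)"
      unfolding k_def using ii i2 by (simp add: of_nat_diff)
    have ik: "i * (n - i) = (n - 1) + k"
    proof -
      have "real (i * (n - i)) = real (n - 1) + real k"
        using kr ii i2 by (simp add: of_nat_diff algebra_simps)
      thus ?thesis by (metis of_nat_add of_nat_eq_iff)
    qed
    have t1: "tfun n p 1 = q ^ (n - 1)" by (simp add: tfun_def q_def)
    have ch: "((n - 1) choose (i - 1)) + ((n - 1) choose (n - i - 1)) = n choose i"
    proof -
      have "(n - 1) choose (n - i - 1) = (n - 1) choose i"
        using binomial_symmetric[of i "n-1"] ii i2 by (simp add: diff_diff_add)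
      moreover have e1: "Suc (i - 1) = i" and e2: "Suc (n - 1) = n" using ii i2 by auto
      ultimately show ?thesis using binomial_Suc_Suc[of "n-1" "i-1"] by metis
    qed
    have g: "gfun n p i = real (n choose i) * q ^ (n - 1) * q ^ k"
    proof -
      have "n - (n - i) = i" using i2 by simp
      hence "gfun n p i = real ((n - 1) choose (i - 1)) * q ^ (i * (n - i))
          + real ((n - 1) choose (n - i - 1)) * q ^ (i * (n - i))"
        by (simp add: gfun_def tfun_def q_def mult.commute)
      also have "\<dots> = real (n choose i) * q ^ (i * (n - i))"
        using ch by (metis distrib_right of_nat_add)
      finally show ?thesis using ik by (simp add: power_add)
    qed
    have npos: "real n > 0" using n3 by simp
    define L where "L = ln (real n)"
    have L0: "L \<ge> 0" using n3 L_def by simp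
    have qe: "q \<le> exp (- p)" using exp_ge_add_one_self[of "-p"] q_def by simp
    have "q ^ k \<le> exp (- p) ^ k" by (rule power_mono[OF qe q0])
    also have "\<dots> = exp (- p * real k)" by (simp add: exp_of_nat_mult[symmetric] mult.commute)
    also have "\<dots> \<le> exp (- (c * L / real n) * real k)"
    proof -
      have "c * L / real n * real k \<le> p * real k"
        using pp L_def by (intro mult_right_mono) auto
      thus ?thesis by simp
    qed
    finally have qk: "q ^ k \<le> exp (- (c * L / real n) * real k)" .
    have "real (n choose i) \<le> real n ^ i"
      using binomial_le_pow[of i n] i2 by (metis le_trans le_add2 mult_2 of_nat_le_iff of_nat_power)
    also have "\<dots> = exp (real i * L)" using npos L_def
      by (metis exp_of_nat_mult exp_ln)
    finally have cb: "real (n choose i) \<le> exp (real i * L)" .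
    have "real (n choose i) * q ^ k \<le> exp (real i * L) * exp (- (c * L / real n) * real k)"
      by (rule mult_mono[OF cb qk]) (auto simp: q0)
    also have "\<dots> = exp (real i * L - (c * L / real n) * real k)" by (simp add: exp_add[symmetric])
    also have "\<dots> \<le> exp 0"
    proof -
      have "real i * real n * L \<le> c * real k * L" using KI kr L0 mult_right_mono by metis
      hence "real i * L \<le> (c * L / real n) * real k" using npos by (simp add: field_simps)
      thus ?thesis by simp
    qed
    finally have "real (n choose i) * q ^ k \<le> 1" by simp
    hence "q ^ (n - 1) * (real (n choose i) * q ^ k) \<le> q ^ (n - 1) * 1"
      by (rule mult_left_mono) (simp add: q0)
    thus "gfun n p i \<le> tfun n p 1" using g t1 by (simp add: algebra_simps)
  qed
qed

end
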